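(* Let $N,\mu,\beta,\sigma,\gamma,p>0$ and $0<\rho<1$ and consider $$\begin{aligned}S'&=\mu N-\tfrac{\beta}{N}S(1-\rho)I-\tfrac{p}{N}S-\mu S, & E'&=\tfrac{\beta}{N}S(1-\rho)I-(\sigma+\mu) E, & I'&=\sigma E-(\gamma+\mu) I,\\ R'&=\gamma I-\mu R, & V'&=\tfrac{p}{N}S-\mu V.\end{aligned}$$ Let $\mathcal{R}_0=\dfrac{\mu N\sigma\beta(1-\rho)}{(\sigma+\mu)(\gamma+\mu)(p+\mu N)}$. If $\mathcal{R}_0>1$, then the endemic equilibrium $P^e=(S^e,E^e,I^e,R^e,V^e)$ given by $$S^e=\frac{(\sigma+\mu)(\gamma+\mu)N}{\sigma\beta(1-\rho)},\quad I^e=\frac{\mu N\sigma\beta(1-\rho)-(\sigma+\mu)(\gamma+\mu)(p+\mu N)}{(\sigma+\mu)(\gamma+\mu)\beta(1-\rho)},$$ $$E^e=\frac{\gamma+\mu}{\sigma}I^e,\quad R^e=\frac{\gamma}{\mu}I^e,\quad V^e=\frac{p}{\mu N}S^e$$ is asymptotically stable.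
   Context: SEIR model with vaccination at constant effective rate $p$ and equal birth/death rate $\mu$; $\mathcal{R}_0$ is the reproductive number, and $\mathcal{R}_0>1$ is equivalent to $I^e>0$. *)

theory Defs
  imports "HOL-Analysis.Analysis"
begin

type_synonym state5 = "real \<times> real \<times> real \<times> real \<times> real"

definition seirv_field ::
  "real \<Rightarrow> real \<Rightarrow> real \<Rightarrow> real \<Rightarrow> real \<Rightarrow> real \<Rightarrow> real \<Rightarrow> state5 \<Rightarrow> state5" where
  "seirv_field N \<mu> \<beta> \<sigma> \<gamma> p \<rho> =
     (\<lambda>(S, E, I, R, V).
        (\<mu> * N - \<beta> / N * S * (1 - \<rho>) * I - p / N * S - \<mu> * S,
         \<beta> / N * S * (1 - \<rho>) * I - (\<sigma> + \<mu>) * E,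
         \<sigma> * E - (\<gamma> + \<mu>) * I,
         \<gamma> * I - \<mu> * R,
         p / N * S - \<mu> * V))"

definition is_solution_on :: "('a::real_normed_vector \<Rightarrow> 'a) \<Rightarrow> (real \<Rightarrow> 'a) \<Rightarrow> real set \<Rightarrow> bool" where
  "is_solution_on f x T \<longleftrightarrow> (\<forall>t\<in>T. (x has_vector_derivative f (x t)) (at t within T))"

definition asymptotically_stable :: "('a::real_normed_vector \<Rightarrow> 'a) \<Rightarrow> 'a \<Rightarrow> bool" where
  "asymptotically_stable f xe \<longleftrightarrow>
     f xe = 0 \<and>
     (\<forall>\<epsilon>>0. \<exists>\<delta>>0. \<forall>x T. is_solution_on f x {0..T} \<and> dist (x 0) xe < \<delta> \<longrightarrow>
                       (\<forall>t\<in>{0..T}. dist (x t) xe < \<epsilon>)) \<and>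
     (\<exists>\<delta>>0. \<forall>x. is_solution_on f x {0..} \<and> dist (x 0) xe < \<delta> \<longrightarrow>
                 (x \<longlongrightarrow> xe) at_top)"

definition R0_seirv :: "real \<Rightarrow> real \<Rightarrow> real \<Rightarrow> real \<Rightarrow> real \<Rightarrow> real \<Rightarrow> real \<Rightarrow> real" where
  "R0_seirv N \<mu> \<beta> \<sigma> \<gamma> p \<rho> =
     \<mu> * N * \<sigma> * \<beta> * (1 - \<rho>) / ((\<sigma> + \<mu>) * (\<gamma> + \<mu>) * (p + \<mu> * N))"

end

theory Submission
  imports Defs
begin

lemma decay_step:
  fixes g g' :: "real \<Rightarrow> real"
  assumes "a < b" "continuous_on {a..b} g"
    "\<And>t. a < t \<Longrightarrow> t < b \<Longrightarrow> (g has_derivative (\<lambda>h. h * g' t)) (at t)"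
    "\<And>t. a < t \<Longrightarrow> t < b \<Longrightarrow> g' t \<le> - k"
  shows "g b \<le> g a - k * (b - a)"
proof -
  obtain \<xi> where xi: "a < \<xi>" "\<xi> < b" "g b - g a = (b - a) * g' \<xi>"
    by (rule mvt[OF assms(1,2), where f'="\<lambda>t h. h * g' t"], rule assms(3), auto)
  have "(b - a) * g' \<xi> \<le> (b - a) * (- k)"
    using assms(1) assms(4)[OF xi(1,2)] by (intro mult_left_mono) auto
  thus ?thesis using xi(3) by (simp add: algebra_simps)
qed

context
  fixes f :: "'a::real_normed_vector \<Rightarrow> 'a" and xe :: 'a
    and \<Phi> :: "'a \<Rightarrow> real" and D\<Phi> :: "'a \<Rightarrow> 'a \<Rightarrow> real"
    and A B r c :: real
  assumes deriv: "\<And>y. (\<Phi> has_derivative D\<Phi> y) (at y)"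
    and lo: "\<And>y. A * (dist y xe)\<^sup>2 \<le> \<Phi> y"
    and up: "\<And>y. \<Phi> y \<le> B * (dist y xe)\<^sup>2"
    and pos: "A > 0" "B > 0" "r > 0" "c > 0"
    and dec: "\<And>y. dist y xe < r \<Longrightarrow> D\<Phi> y (f y) \<le> - c * \<Phi> y"
begin

lemma Phi_nonneg: "\<Phi> y \<ge> 0"
  using lo[of y] pos by (meson order_trans zero_le_mult_iff zero_le_power2 less_imp_le)

lemma traj_deriv:
  assumes "is_solution_on f x {0..T}" "0 < t" "t < T"
  shows "((\<lambda>t. \<Phi> (x t)) has_derivative (\<lambda>h. h * D\<Phi> (x t) (f (x t)))) (at t)"
proof -
  have "(x has_vector_derivative f (x t)) (at t within {0..T})"
    using assms unfolding is_solution_on_def by auto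
  hence xd: "(x has_derivative (\<lambda>h. h *\<^sub>R f (x t))) (at t)"
    using at_within_Icc_at[OF assms(2,3)] by (simp add: has_vector_derivative_def)
  have lin: "bounded_linear (D\<Phi> (x t))"
    using deriv[of "x t"] has_derivative_bounded_linear by blast
  have "((\<lambda>t. \<Phi> (x t)) has_derivative (\<lambda>h. D\<Phi> (x t) (h *\<^sub>R f (x t)))) (at t)"
    using has_derivative_compose[OF xd deriv] .
  moreover have "(\<lambda>h. D\<Phi> (x t) (h *\<^sub>R f (x t))) = (\<lambda>h. h * D\<Phi> (x t) (f (x t)))"
    using linear_simps(5)[OF lin] by auto
  ultimately show ?thesis by simp
qed

lemma traj_cont:
  assumes "is_solution_on f x {0..T}"
  shows "continuous_on {0..T} (\<lambda>t. \<Phi> (x t))"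
proof -
  have "continuous_on {0..T} x"
    using assms unfolding is_solution_on_def has_vector_derivative_def
    by (intro has_derivative_continuous_on) auto
  moreover have "continuous_on UNIV \<Phi>"
    using deriv by (intro has_derivative_continuous_on) auto
  ultimately show ?thesis
    using continuous_on_compose2[of UNIV \<Phi> "{0..T}" x] by auto
qed

lemma traj_contx:
  assumes "is_solution_on f x {0..T}"
  shows "continuous_on {0..T} (\<lambda>t. dist (x t) xe)"
proof -
  have "continuous_on {0..T} x"
    using assms unfolding is_solution_on_def has_vector_derivative_def
    by (intro has_derivative_continuous_on) auto
  thus ?thesis by (intro continuous_intros) 
qed

lemma nonincr:
  assumes sol: "is_solution_on f x {0..T}" and st: "0 \<le> s" "s \<le> t" "t \<le> T"
    and inside: "\<And>u. s < u \<Longrightarrow> u < t \<Longrightarrow> dist (x u) xe < r"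
    and k: "\<And>u. s < u \<Longrightarrow> u < t \<Longrightarrow> - c * \<Phi> (x u) \<le> - k"
  shows "\<Phi> (x t) \<le> \<Phi> (x s) - k * (t - s)"
proof (cases "s = t")
  case True thus ?thesis by simp
next
  case False
  hence "s < t" using st by simp
  show ?thesis
  proof (rule decay_step[OF \<open>s < t\<close>, where g' = "\<lambda>u. D\<Phi> (x u) (f (x u))"])
    show "continuous_on {s..t} (\<lambda>t. \<Phi> (x t))"
      using traj_cont[OF sol] by (rule continuous_on_subset) (use st in auto)
    fix u assume u: "s < u" "u < t"
    show "((\<lambda>t. \<Phi> (x t)) has_derivative (\<lambda>h. h * D\<Phi> (x u) (f (x u)))) (at u)"
      using traj_deriv[OF sol] u st by auto
    show "D\<Phi> (x u) (f (x u)) \<le> - k"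
      using dec[OF inside[OF u]] k[OF u] by linarith
  qed
qed

lemma stay_in:
  assumes sol: "is_solution_on f x {0..T}" and \<rho>: "0 < \<rho>" "\<rho> \<le> r"
    and d0: "dist (x 0) xe < \<rho>" "B * (dist (x 0) xe)\<^sup>2 < A * \<rho>\<^sup>2"
  shows "\<forall>t\<in>{0..T}. dist (x t) xe < \<rho>"
proof (rule ccontr)
  assume neg: "\<not> ?thesis"
  define K where "K = {0..T} \<inter> (\<lambda>t. dist (x t) xe) -` {\<rho>..}"
  have Kne: "K \<noteq> {}" using neg unfolding K_def by force
  have "closed K" unfolding K_def
    by (rule continuous_closed_preimage[OF traj_contx[OF sol]]) auto
  moreover have "bdd_below K" unfolding K_def by (rule bdd_belowI[of _ 0]) auto
  ultimately have t1K: "Inf K \<in> K" using Kne closed_contains_Inf by blast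
  define t1 where "t1 = Inf K"
  have t1: "0 \<le> t1" "t1 \<le> T" "\<rho> \<le> dist (x t1) xe" using t1K unfolding K_def t1_def by auto
  have before: "dist (x u) xe < \<rho>" if "0 \<le> u" "u < t1" for u
  proof (rule ccontr)
    assume "\<not> ?thesis"
    hence "u \<in> K" using that t1 unfolding K_def by auto
    hence "t1 \<le> u" unfolding t1_def using \<open>bdd_below K\<close> by (rule cInf_lower)
    thus False using that by simp
  qed
  have "\<Phi> (x t1) \<le> \<Phi> (x 0) - 0 * (t1 - 0)"
    by (rule nonincr[OF sol]) (use t1 before \<rho> pos Phi_nonneg in \<open>auto intro: order.strict_trans2 mult_nonneg_nonneg\<close>,
       meson before less_eq_real_def order.strict_trans2 \<rho>(2))
  also have "\<dots> \<le> B * (dist (x 0) xe)\<^sup>2" using up by simp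
  also have "\<dots> < A * \<rho>\<^sup>2" by fact
  also have "\<dots> \<le> A * (dist (x t1) xe)\<^sup>2"
    using t1(3) \<rho> pos by (intro mult_left_mono power_mono) auto
  also have "\<dots> \<le> \<Phi> (x t1)" by (rule lo)
  finally show False by simp
qed

lemma delta_choice:
  assumes "\<rho> > 0"
  shows "\<exists>\<delta>>0. \<delta> \<le> \<rho> \<and> B * \<delta>\<^sup>2 < A * \<rho>\<^sup>2"
proof (intro exI conjI)
  let ?\<delta> = "\<rho> * sqrt (A / (A + B))"
  have q: "0 < A / (A + B)" "A / (A + B) < 1" using pos by auto
  show "?\<delta> > 0" using assms q by auto
  show "?\<delta> \<le> \<rho>" using assms q by (simp add: mult_le_cancel_left1 real_sqrt_le_1_iff)
  have "B * ?\<delta>\<^sup>2 = \<rho>\<^sup>2 * (A * B / (A + B))" using q by (simp add: power_mult_distrib)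
  also have "\<dots> < \<rho>\<^sup>2 * A" using pos assms by (intro mult_strict_left_mono) (auto simp: field_simps)
  finally show "B * ?\<delta>\<^sup>2 < A * \<rho>\<^sup>2" by (simp add: mult.commute)
qed

lemma small_start:
  assumes "\<delta> > 0" "\<delta> \<le> \<rho>" "B * \<delta>\<^sup>2 < A * \<rho>\<^sup>2" "dist y xe < \<delta>"
  shows "dist y xe < \<rho>" "B * (dist y xe)\<^sup>2 < A * \<rho>\<^sup>2"
proof -
  show "dist y xe < \<rho>" using assms by simp
  have "B * (dist y xe)\<^sup>2 \<le> B * \<delta>\<^sup>2" using assms pos
    by (intro mult_left_mono power_mono) auto
  thus "B * (dist y xe)\<^sup>2 < A * \<rho>\<^sup>2" using assms by simp
qed

lemma generic_stable:
  assumes eq: "f xe = 0"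
  shows "asymptotically_stable f xe"
  unfolding asymptotically_stable_def
proof (intro conjI allI impI)
  show "f xe = 0" by fact
next
  fix \<epsilon> :: real assume "\<epsilon> > 0"
  define \<rho> where "\<rho> = min \<epsilon> r"
  have \<rho>: "0 < \<rho>" "\<rho> \<le> r" "\<rho> \<le> \<epsilon>" using \<open>\<epsilon> > 0\<close> pos unfolding \<rho>_def by auto
  obtain \<delta> where \<delta>: "\<delta> > 0" "\<delta> \<le> \<rho>" "B * \<delta>\<^sup>2 < A * \<rho>\<^sup>2" using delta_choice[OF \<rho>(1)] by blast
  show "\<exists>\<delta>>0. \<forall>x T. is_solution_on f x {0..T} \<and> dist (x 0) xe < \<delta> \<longrightarrow>
                       (\<forall>t\<in>{0..T}. dist (x t) xe < \<epsilon>)"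
  proof (intro exI[of _ \<delta>] conjI allI impI \<open>\<delta> > 0\<close>)
    fix x T assume h: "is_solution_on f x {0..T} \<and> dist (x 0) xe < \<delta>"
    have "\<forall>t\<in>{0..T}. dist (x t) xe < \<rho>"
      using stay_in[of x T \<rho>] small_start[OF \<delta>] h \<rho> by blast
    thus "\<forall>t\<in>{0..T}. dist (x t) xe < \<epsilon>" using \<rho> by force
  qed
next
  obtain \<delta> where \<delta>: "\<delta> > 0" "\<delta> \<le> r" "B * \<delta>\<^sup>2 < A * r\<^sup>2" using delta_choice[OF pos(3)] by blast
  show "\<exists>\<delta>>0. \<forall>x. is_solution_on f x {0..} \<and> dist (x 0) xe < \<delta> \<longrightarrow> (x \<longlongrightarrow> xe) at_top"
  proof (intro exI[of _ \<delta>] conjI allI impI \<open>\<delta> > 0\<close>)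
    fix x assume h: "is_solution_on f x {0..} \<and> dist (x 0) xe < \<delta>"
    have solT: "is_solution_on f x {0..T}" for T
      using h unfolding is_solution_on_def
      by (metis atLeastAtMost_iff atLeast_iff atLeastatMost_subset_iff has_vector_derivative_within_subset order.refl subsetI)
    have ins: "dist (x t) xe < r" if "0 \<le> t" for t
      using stay_in[OF solT[of t] pos(3) order.refl] small_start[OF \<delta>] h that by auto
    have mono: "\<Phi> (x t) \<le> \<Phi> (x s)" if "0 \<le> s" "s \<le> t" for s t
      using nonincr[OF solT[of t] that order.refl, of 0] ins that pos Phi_nonneg
      by (auto simp: mult_nonneg_nonneg)
    show "(x \<longlongrightarrow> xe) at_top"
      unfolding tendsto_iff
    proof (intro allI impI)
      fix e :: real assume "e > 0"
      define \<eta> where "\<eta> = A * e\<^sup>2"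
      have "\<eta> > 0" using pos \<open>e > 0\<close> unfolding \<eta>_def by auto
      have "\<exists>t0\<ge>0. \<Phi> (x t0) < \<eta>"
      proof (rule ccontr)
        assume "\<not> ?thesis"
        hence big: "\<And>t. 0 \<le> t \<Longrightarrow> \<eta> \<le> \<Phi> (x t)" by force
        define T where "T = \<Phi> (x 0) / (c * \<eta>) + 1"
        have "T > 0" unfolding T_def using Phi_nonneg[of "x 0"] pos \<open>\<eta> > 0\<close>
          by (smt (verit) divide_nonneg_pos mult_pos_pos)
        have "\<Phi> (x T) \<le> \<Phi> (x 0) - (c * \<eta>) * (T - 0)"
          by (rule nonincr[OF solT[of T]]) (use \<open>T > 0\<close> ins big pos in auto)
        also have "\<dots> = - (c * \<eta>)" unfolding T_def using pos \<open>\<eta> > 0\<close>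
          by (simp add: field_simps)
        finally show False using Phi_nonneg[of "x T"] pos \<open>\<eta> > 0\<close>
          by (smt (verit) mult_pos_pos)
      qed
      then obtain t0 where t0: "t0 \<ge> 0" "\<Phi> (x t0) < \<eta>" by blast
      show "\<forall>\<^sub>F t in at_top. dist (x t) xe < e"
        unfolding eventually_at_top_linorder
      proof (intro exI allI impI)
        fix t assume "t \<ge> t0"
        have "A * (dist (x t) xe)\<^sup>2 < A * e\<^sup>2"
          using lo[of "x t"] mono[OF t0(1) \<open>t \<ge> t0\<close>] t0(2) unfolding \<eta>_def by linarith
        hence "(dist (x t) xe)\<^sup>2 < e\<^sup>2" using pos by simp
        thus "dist (x t) xe < e" using \<open>e > 0\<close> by (simp add: power_less_imp_less_base)
      qed
    qed
  qed
qed

end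

lemma key_lin:
  fixes q b m n \<mu> x y z u w :: real
  assumes pos: "q > 0" "b > 0" "m > 0" "n > 0" "\<mu> > 0"
    and d: "d = q + b" and \<epsilon>: "\<epsilon> = m / (4*n + 2*d)" and \<eta>: "\<eta> = \<epsilon> * q / 8"
  shows "(m/q*x + \<epsilon>*z)*(-d*x - q*z) + y*(m*(x - y + z)) + (m/n*z + \<epsilon>*x)*(n*(y - z))
          + 2*(\<eta>/\<mu>)*(u*(\<mu>*(z-u)) + w*(\<mu>*(x-w))) \<le> -\<eta>*(x\<^sup>2+y\<^sup>2+z\<^sup>2+u\<^sup>2+w\<^sup>2)"
proof -
  have dpos: "d > 0" "q \<le> d" using d pos by auto
  have den: "4*n + 2*d > 0" using pos dpos by auto
  have e0: "\<epsilon> > 0" using \<epsilon> den pos by auto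
  have eprod: "\<epsilon> * (4*n + 2*d) = m" using \<epsilon> den by simp
  have en: "\<epsilon> * n \<le> m/4" using eprod e0 dpos by (simp add: algebra_simps) (smt (verit) mult_pos_pos)
  have ed: "\<epsilon> * d \<le> m/2" using eprod e0 pos by (simp add: algebra_simps) (smt (verit) mult_pos_pos)
  have eq: "\<epsilon> * q \<le> m/2" using ed e0 dpos by (smt (verit) mult_left_mono)
  have \<eta>0: "\<eta> > 0" unfolding \<eta> using e0 pos by simp
  have \<eta>m: "\<eta> \<le> m/16" using \<eta> e0 pos eq by auto
  define \<omega> where "\<omega> = y - z"
  define \<theta> where "\<theta> = m + \<epsilon>*n"
  have th: "m \<le> \<theta>" "\<theta> \<le> 5*m/4" using en e0 pos unfolding \<theta>_def by auto
  have Leq: "(m/q*x + \<epsilon>*z)*(-d*x - q*z) + y*(m*(x - y + z)) + (m/n*z + \<epsilon>*x)*(n*(y - z))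
          + 2*(\<eta>/\<mu>)*(u*(\<mu>*(z-u)) + w*(\<mu>*(x-w)))
        = -((m*d/q)*x\<^sup>2) + \<theta>*(x*\<omega>) - m*\<omega>\<^sup>2 - \<epsilon>*d*(x*z) - \<epsilon>*q*z\<^sup>2
          + 2*\<eta>*(u*z - u\<^sup>2 + w*x - w\<^sup>2)"
    unfolding \<omega>_def \<theta>_def using pos by (simp add: field_simps power2_eq_square)
  have i: "\<theta>*(x*\<omega>) \<le> (3*m/4)*\<omega>\<^sup>2 + (25*m/48)*x\<^sup>2"
  proof -
    have "0 \<le> (3*m/2*\<omega> - \<theta>*x)\<^sup>2" by simp
    hence "3*m*(\<theta>*(x*\<omega>)) \<le> 9*m\<^sup>2/4*\<omega>\<^sup>2 + \<theta>\<^sup>2*x\<^sup>2"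
      by (simp add: power2_eq_square algebra_simps)
    moreover have "\<theta>\<^sup>2*x\<^sup>2 \<le> (25*m\<^sup>2/16)*x\<^sup>2"
    proof -
      have "(4*\<theta>)*(4*\<theta>) \<le> (5*m)*(5*m)" using th pos mult_mono[of "4*\<theta>" "5*m" "4*\<theta>" "5*m"] by auto
      thus ?thesis by (intro mult_right_mono) (auto simp: power2_eq_square)
    qed
    ultimately have "3*m*(\<theta>*(x*\<omega>)) \<le> 3*m*((3*m/4)*\<omega>\<^sup>2 + (25*m/48)*x\<^sup>2)"
      by (simp add: power2_eq_square algebra_simps)
    thus ?thesis using pos by simp
  qed
  have ii: "-(\<epsilon>*d*(x*z)) \<le> (\<epsilon>*q/2)*z\<^sup>2 + (m*d/(4*q))*x\<^sup>2"
  proof -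
    have "0 \<le> (q*z + d*x)\<^sup>2" by simp
    hence "-(2*q*d*(x*z)) \<le> q\<^sup>2*z\<^sup>2 + d\<^sup>2*x\<^sup>2" by (simp add: power2_eq_square algebra_simps)
    hence "\<epsilon>*(-(2*q*d*(x*z))) \<le> \<epsilon>*(q\<^sup>2*z\<^sup>2 + d\<^sup>2*x\<^sup>2)" using e0 by (intro mult_left_mono) auto
    moreover have "\<epsilon>*d*(d*x\<^sup>2) \<le> (m/2)*(d*x\<^sup>2)" using ed dpos by (intro mult_right_mono) auto
    ultimately have "2*q*(-(\<epsilon>*d*(x*z))) \<le> 2*q*((\<epsilon>*q/2)*z\<^sup>2 + (m*d/(4*q))*x\<^sup>2)"
      using pos by (simp add: power2_eq_square algebra_simps)
    thus ?thesis using pos by (metis mult_le_cancel_left_pos zero_less_mult_iff zero_less_numeral)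
  qed
  have iii: "2*\<eta>*(u*z - u\<^sup>2 + w*x - w\<^sup>2) \<le> \<eta>*(z\<^sup>2 + x\<^sup>2 - u\<^sup>2 - w\<^sup>2)"
  proof -
    have "0 \<le> (u - z)\<^sup>2 + (w - x)\<^sup>2" by simp
    hence "2*(u*z - u\<^sup>2 + w*x - w\<^sup>2) \<le> z\<^sup>2 + x\<^sup>2 - u\<^sup>2 - w\<^sup>2" by (simp add: power2_eq_square algebra_simps)
    thus ?thesis using \<eta>0 by (metis mult.assoc mult_left_mono less_imp_le mult.left_commute)
  qed
  have iv: "m*x\<^sup>2 \<le> (m*d/q)*x\<^sup>2"
  proof -
    have "m \<le> m*d/q" using pos dpos by (simp add: field_simps)
    thus ?thesis by (intro mult_right_mono) auto
  qed
  have v: "y\<^sup>2 \<le> 2*\<omega>\<^sup>2 + 2*z\<^sup>2"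
  proof -
    have "0 \<le> (\<omega> - z)\<^sup>2" by simp
    thus ?thesis unfolding \<omega>_def by (simp add: power2_eq_square algebra_simps)
  qed
  have vi: "16*(\<eta>*x\<^sup>2) \<le> m*x\<^sup>2" "16*(\<eta>*\<omega>\<^sup>2) \<le> m*\<omega>\<^sup>2"
    using mult_right_mono[OF \<eta>m, of "x\<^sup>2"] mult_right_mono[OF \<eta>m, of "\<omega>\<^sup>2"] by simp_all
  have vii: "\<eta>*y\<^sup>2 \<le> 2*(\<eta>*\<omega>\<^sup>2) + 2*(\<eta>*z\<^sup>2)"
    using mult_left_mono[OF v, of \<eta>] \<eta>0 by (simp add: algebra_simps)
  have eqe: "\<epsilon>*q*z\<^sup>2 = 8*(\<eta>*z\<^sup>2)" using \<eta> by simp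
  have i': "\<theta>*(x*\<omega>) \<le> 3/4*(m*\<omega>\<^sup>2) + 25/48*(m*x\<^sup>2)" using i by simp
  have ii': "-(\<epsilon>*d*(x*z)) \<le> 4*(\<eta>*z\<^sup>2) + 1/4*((m*d/q)*x\<^sup>2)"
  proof -
    have "(\<epsilon>*q/2)*z\<^sup>2 = 4*(\<eta>*z\<^sup>2)" unfolding \<eta> by simp
    moreover have "(m*d/(4*q))*x\<^sup>2 = 1/4*((m*d/q)*x\<^sup>2)" by simp
    ultimately show ?thesis using ii by linarith
  qed
  have iii': "2*\<eta>*(u*z - u\<^sup>2 + w*x - w\<^sup>2) \<le> \<eta>*z\<^sup>2 + \<eta>*x\<^sup>2 - \<eta>*u\<^sup>2 - \<eta>*w\<^sup>2"
    using iii by (simp add: algebra_simps)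
  have rhs: "-\<eta>*(x\<^sup>2+y\<^sup>2+z\<^sup>2+u\<^sup>2+w\<^sup>2) = -(\<eta>*x\<^sup>2) - \<eta>*y\<^sup>2 - \<eta>*z\<^sup>2 - \<eta>*u\<^sup>2 - \<eta>*w\<^sup>2"
    by (simp add: algebra_simps)
  have nn: "0 \<le> m*x\<^sup>2" "0 \<le> m*\<omega>\<^sup>2" using pos by auto
  show ?thesis unfolding Leq rhs using nn using i' ii' iii' iv vi vii eqe by linarith
qed

lemma key_nl:
  fixes q m \<epsilon> \<eta> \<rho> x y z :: real
  assumes pos: "q > 0" "m > 0" "\<epsilon> > 0"
    and b: "\<bar>x\<bar> \<le> \<rho>" "\<bar>y\<bar> \<le> \<rho>" "\<bar>z\<bar> \<le> \<rho>" "(2*m + \<epsilon>*q)*\<rho> \<le> \<eta>"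
  shows "(m/q*x + \<epsilon>*z)*(- q*x*z) + y*(m*x*z) \<le> \<eta>/2*(x\<^sup>2 + z\<^sup>2)"
proof -
  have e1: "(m/q*x + \<epsilon>*z)*(- q*x*z) + y*(m*x*z) = (x*z) * (m*y - m*x - \<epsilon>*q*z)"
    using pos by (simp add: field_simps)
  have "\<bar>m*y - m*x - \<epsilon>*q*z\<bar> \<le> m*\<bar>y\<bar> + m*\<bar>x\<bar> + \<epsilon>*q*\<bar>z\<bar>"
  proof -
    have "\<bar>m*y\<bar> = m*\<bar>y\<bar>" "\<bar>m*x\<bar> = m*\<bar>x\<bar>" "\<bar>\<epsilon>*q*z\<bar> = \<epsilon>*q*\<bar>z\<bar>"
      using pos by (simp_all add: abs_mult)
    thus ?thesis by (smt (verit))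
  qed
  also have "\<dots> \<le> m*\<rho> + m*\<rho> + \<epsilon>*q*\<rho>"
    using pos b by (intro add_mono mult_left_mono) auto
  also have "\<dots> \<le> \<eta>" using b by (simp add: algebra_simps)
  finally have h: "\<bar>m*y - m*x - \<epsilon>*q*z\<bar> \<le> \<eta>" .
  have "(x*z) * (m*y - m*x - \<epsilon>*q*z) \<le> \<bar>x*z\<bar> * \<bar>m*y - m*x - \<epsilon>*q*z\<bar>"
    by (metis abs_ge_self abs_mult)
  also have "\<dots> \<le> \<bar>x*z\<bar> * \<eta>" using h by (intro mult_left_mono) auto
  also have "\<dots> \<le> (x\<^sup>2 + z\<^sup>2)/2 * \<eta>"
  proof -
    have "0 \<le> (\<bar>x\<bar> - \<bar>z\<bar>)\<^sup>2" by simp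
    hence "\<bar>x*z\<bar> \<le> (x\<^sup>2 + z\<^sup>2)/2" by (simp add: power2_eq_square algebra_simps abs_mult)
    moreover have "\<eta> \<ge> 0" using h by linarith
    ultimately show ?thesis by (intro mult_right_mono) auto
  qed
  finally show ?thesis unfolding e1 by (simp add: algebra_simps)
qed

lemma key_full:
  fixes q b m n \<mu> x y z u w \<rho> :: real
  assumes pos: "q > 0" "b > 0" "m > 0" "n > 0" "\<mu> > 0"
    and d: "d = q + b" and \<epsilon>: "\<epsilon> = m / (4*n + 2*d)" and \<eta>: "\<eta> = \<epsilon> * q / 8"
    and bd: "\<bar>x\<bar> \<le> \<rho>" "\<bar>y\<bar> \<le> \<rho>" "\<bar>z\<bar> \<le> \<rho>" "(2*m + \<epsilon>*q)*\<rho> \<le> \<eta>"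
  shows "(m/q*x + \<epsilon>*z)*(-d*x - q*z - q*x*z) + y*(m*(x - y + z) + m*x*z) + (m/n*z + \<epsilon>*x)*(n*(y - z))
          + 2*(\<eta>/\<mu>)*(u*(\<mu>*(z-u)) + w*(\<mu>*(x-w))) \<le> -(\<eta>/2)*(x\<^sup>2+y\<^sup>2+z\<^sup>2+u\<^sup>2+w\<^sup>2)"
proof -
  have e0: "\<epsilon> > 0" using \<epsilon> pos d by auto
  have L: "(m/q*x + \<epsilon>*z)*(-d*x - q*z) + y*(m*(x - y + z)) + (m/n*z + \<epsilon>*x)*(n*(y - z))
          + 2*(\<eta>/\<mu>)*(u*(\<mu>*(z-u)) + w*(\<mu>*(x-w))) \<le> -\<eta>*(x\<^sup>2+y\<^sup>2+z\<^sup>2+u\<^sup>2+w\<^sup>2)"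
    by (rule key_lin[OF pos d \<epsilon> \<eta>])
  have N: "(m/q*x + \<epsilon>*z)*(- q*x*z) + y*(m*x*z) \<le> \<eta>/2*(x\<^sup>2 + z\<^sup>2)"
    by (rule key_nl[OF pos(1,3) e0 bd])
  have "\<eta> \<ge> 0" unfolding \<eta> using e0 pos by simp
  hence P: "\<eta>/2*(x\<^sup>2 + z\<^sup>2) \<le> \<eta>/2*(x\<^sup>2+y\<^sup>2+z\<^sup>2+u\<^sup>2+w\<^sup>2)"
    by (intro mult_left_mono) auto
  have spl: "(m/q*x + \<epsilon>*z)*(-d*x - q*z - q*x*z) + y*(m*(x - y + z) + m*x*z) + (m/n*z + \<epsilon>*x)*(n*(y - z))
          + 2*(\<eta>/\<mu>)*(u*(\<mu>*(z-u)) + w*(\<mu>*(x-w)))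
      = ((m/q*x + \<epsilon>*z)*(-d*x - q*z) + y*(m*(x - y + z)) + (m/n*z + \<epsilon>*x)*(n*(y - z))
          + 2*(\<eta>/\<mu>)*(u*(\<mu>*(z-u)) + w*(\<mu>*(x-w)))) + ((m/q*x + \<epsilon>*z)*(- q*x*z) + y*(m*x*z))"
    by (simp add: algebra_simps)
  show ?thesis unfolding spl using L N P by (simp add: algebra_simps)
qed

lemma P_lower:
  fixes q b m n \<kappa> x y z u w :: real
  assumes pos: "q > 0" "b > 0" "m > 0" "n > 0" "\<kappa> > 0"
    and d: "d = q + b" and \<epsilon>: "\<epsilon> = m / (4*n + 2*d)"
    and a0: "a0 = min (min (m/(4*q)) (1/2)) (min (m/(4*n)) \<kappa>)"
  shows "a0 * (x\<^sup>2+y\<^sup>2+z\<^sup>2+u\<^sup>2+w\<^sup>2) \<le> (m/q*x\<^sup>2 + y\<^sup>2 + m/n*z\<^sup>2)/2 + \<epsilon>*x*z + \<kappa>*(u\<^sup>2+w\<^sup>2)"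
proof -
  have dpos: "d > 0" "q \<le> d" using d pos by auto
  have den: "4*n + 2*d > 0" using pos dpos by auto
  have e0: "\<epsilon> > 0" using \<epsilon> den pos by auto
  define t where "t = 2*q*\<epsilon>/m"
  have t0: "t > 0" unfolding t_def using pos e0 by auto
  have "0 \<le> (x + t*z)\<^sup>2" by simp
  hence h1: "-(2*t*(x*z)) \<le> x\<^sup>2 + t\<^sup>2*z\<^sup>2" by (simp add: power2_eq_square algebra_simps)
  have "\<epsilon>/(2*t) * (-(2*t*(x*z))) \<le> \<epsilon>/(2*t) * (x\<^sup>2 + t\<^sup>2*z\<^sup>2)"
    using h1 e0 t0 by (intro mult_left_mono) auto
  hence h2: "-(\<epsilon>*(x*z)) \<le> \<epsilon>/(2*t)*x\<^sup>2 + (\<epsilon>*t/2)*z\<^sup>2"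
    using t0 by (simp add: field_simps power2_eq_square)
  have c1: "\<epsilon>/(2*t) = m/(4*q)" unfolding t_def using pos e0 by (simp add: field_simps)
  have eps2: "\<epsilon>*\<epsilon>*(4*q*n) \<le> m*m"
  proof -
    have "\<epsilon>*(4*n+2*d) = m" using \<epsilon> den by simp
    moreover have "4*q*n \<le> (4*n+2*d)*(4*n+2*d)"
    proof -
      have "(4*n+2*d)*(4*n+2*d) = 16*(n*n) + 16*(d*n) + 4*(d*d)" by (simp add: algebra_simps)
      moreover have "q*n \<le> d*n" using dpos pos by (intro mult_right_mono) auto
      moreover have "0 \<le> n*n" "0 \<le> d*d" by auto
      moreover have "0 \<le> d*n" using dpos pos by auto
      ultimately show ?thesis by linarith
    qed
    ultimately have "\<epsilon>*\<epsilon>*(4*q*n) \<le> \<epsilon>*\<epsilon>*((4*n+2*d)*(4*n+2*d))"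
      using e0 by (intro mult_left_mono) auto
    also have "\<dots> = (\<epsilon>*(4*n+2*d))*(\<epsilon>*(4*n+2*d))" by algebra
    also have "\<dots> = m*m" using \<open>\<epsilon>*(4*n+2*d) = m\<close> by simp
    finally show ?thesis .
  qed
  have c2: "\<epsilon>*t/2 \<le> m/(4*n)"
  proof -
    have "\<epsilon>*t/2 = (\<epsilon>*\<epsilon>*(4*q*n)) / (4*n*m)" unfolding t_def using pos by (simp add: field_simps)
    also have "\<dots> \<le> (m*m) / (4*n*m)" using eps2 pos by (intro divide_right_mono) auto
    also have "\<dots> = m/(4*n)" using pos by simp
    finally show ?thesis .
  qed
  have h3: "-(\<epsilon>*(x*z)) \<le> m/(4*q)*x\<^sup>2 + m/(4*n)*z\<^sup>2"
    using h2 c1 mult_right_mono[OF c2, of "z\<^sup>2"] by simp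
  have m1: "a0*x\<^sup>2 \<le> m/(4*q)*x\<^sup>2" "a0*y\<^sup>2 \<le> 1/2*y\<^sup>2" "a0*z\<^sup>2 \<le> m/(4*n)*z\<^sup>2" "a0*u\<^sup>2 \<le> \<kappa>*u\<^sup>2" "a0*w\<^sup>2 \<le> \<kappa>*w\<^sup>2"
  proof -
    have h: "a0 \<le> m/(4*q)" "a0 \<le> 1/2" "a0 \<le> m/(4*n)" "a0 \<le> \<kappa>" unfolding a0 by auto
    show "a0*x\<^sup>2 \<le> m/(4*q)*x\<^sup>2" "a0*y\<^sup>2 \<le> 1/2*y\<^sup>2" "a0*z\<^sup>2 \<le> m/(4*n)*z\<^sup>2" "a0*u\<^sup>2 \<le> \<kappa>*u\<^sup>2" "a0*w\<^sup>2 \<le> \<kappa>*w\<^sup>2"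
      using mult_right_mono[OF h(1) zero_le_power2[of x]] mult_right_mono[OF h(2) zero_le_power2[of y]]
        mult_right_mono[OF h(3) zero_le_power2[of z]] mult_right_mono[OF h(4) zero_le_power2[of u]]
        mult_right_mono[OF h(4) zero_le_power2[of w]] by blast+
  qed
  have e: "(m/q*x\<^sup>2 + y\<^sup>2 + m/n*z\<^sup>2)/2 = 2*(m/(4*q)*x\<^sup>2) + 1/2*y\<^sup>2 + 2*(m/(4*n)*z\<^sup>2)" by simp
  have e': "a0 * (x\<^sup>2+y\<^sup>2+z\<^sup>2+u\<^sup>2+w\<^sup>2) = a0*x\<^sup>2 + a0*y\<^sup>2 + a0*z\<^sup>2 + a0*u\<^sup>2 + a0*w\<^sup>2" by (simp add: algebra_simps)
  have e'': "\<kappa>*(u\<^sup>2+w\<^sup>2) = \<kappa>*u\<^sup>2 + \<kappa>*w\<^sup>2" by (simp add: algebra_simps)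
  have e3: "\<epsilon>*x*z = \<epsilon>*(x*z)" by simp
  show ?thesis unfolding e e' e'' e3 using m1 h3 by linarith
qed

lemma lin_aux:
  fixes a A c C k K e E yy N B :: real
  shows "a \<le> A \<Longrightarrow> c \<le> C \<Longrightarrow> k \<le> K \<Longrightarrow> e \<le> E \<Longrightarrow> yy \<le> N \<Longrightarrow> B = A + N + C + E + K
    \<Longrightarrow> 0 \<le> A \<Longrightarrow> 0 \<le> C \<Longrightarrow> 0 \<le> N \<Longrightarrow> 1/2*a + 1/2*yy + 1/2*c + e + k \<le> B"
  by linarith

lemma P_upper:
  fixes m q n \<epsilon> \<kappa> x y z u w :: real
  assumes pos: "q > 0" "m > 0" "n > 0" "\<kappa> > 0" "\<epsilon> > 0"
    and B0: "B0 = m/q + 1 + m/n + \<epsilon> + \<kappa>"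
  shows "(m/q*x\<^sup>2 + y\<^sup>2 + m/n*z\<^sup>2)/2 + \<epsilon>*x*z + \<kappa>*(u\<^sup>2+w\<^sup>2) \<le> B0 * (x\<^sup>2+y\<^sup>2+z\<^sup>2+u\<^sup>2+w\<^sup>2)"
proof -
  have "0 \<le> (x - z)\<^sup>2" by simp
  hence "x*z \<le> (x\<^sup>2 + z\<^sup>2)/2" by (simp add: power2_eq_square algebra_simps)
  hence h: "\<epsilon>*(x*z) \<le> \<epsilon>*(x\<^sup>2 + z\<^sup>2)/2" using pos by (metis mult_left_mono less_imp_le times_divide_eq_right)
  define N2 where "N2 = x\<^sup>2+y\<^sup>2+z\<^sup>2+u\<^sup>2+w\<^sup>2"
  have N: "x\<^sup>2 \<le> N2" "y\<^sup>2 \<le> N2" "z\<^sup>2 \<le> N2" "u\<^sup>2+w\<^sup>2 \<le> N2" "x\<^sup>2 + z\<^sup>2 \<le> N2" unfolding N2_def by auto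
  have H1: "m/q*x\<^sup>2 \<le> m/q*N2" "m/n*z\<^sup>2 \<le> m/n*N2" "\<kappa>*(u\<^sup>2+w\<^sup>2) \<le> \<kappa>*N2" "\<epsilon>*(x\<^sup>2 + z\<^sup>2)/2 \<le> \<epsilon>*N2"
    using N pos by (auto intro!: mult_left_mono divide_right_mono simp: less_imp_le)
  have H2: "B0 * N2 = m/q*N2 + N2 + m/n*N2 + \<epsilon>*N2 + \<kappa>*N2" unfolding B0 by (simp add: algebra_simps)
  have N2p: "0 \<le> N2" unfolding N2_def by simp
  have H3: "0 \<le> m/q*N2" "0 \<le> m/n*N2" "0 \<le> \<epsilon>*N2" "0 \<le> \<kappa>*N2" using pos N2p by auto
  have eqL: "(m/q*x\<^sup>2 + y\<^sup>2 + m/n*z\<^sup>2)/2 + \<epsilon>*x*z + \<kappa>*(u\<^sup>2+w\<^sup>2)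
     = 1/2*(m/q*x\<^sup>2) + 1/2*y\<^sup>2 + 1/2*(m/n*z\<^sup>2) + \<epsilon>*(x*z) + \<kappa>*(u\<^sup>2+w\<^sup>2)" by (simp add: algebra_simps)
  show ?thesis unfolding eqL N2_def[symmetric]
    by (rule lin_aux[OF H1(1) H1(2) H1(3) order.trans[OF h H1(4)] N(2) H2 H3(1) H3(2) N2p])
qed

lemma norm_field:
  fixes A P \<mu> N \<rho> \<sigma> \<gamma> S E I R V Se Ee Ie Re Ve x y z u w :: real
  assumes s: "S = Se + Se*x" "E = Ee + Ee*y" "I = Ie + Ie*z" "R = Re + Re*u" "V = Ve + Ve*w"
    and e1: "\<mu> * N - A * Se * (1 - \<rho>) * Ie - P * Se - \<mu> * Se = 0"
    and e2: "A * Se * (1 - \<rho>) * Ie - (\<sigma> + \<mu>) * Ee = 0"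
    and e3: "\<sigma> * Ee - (\<gamma> + \<mu>) * Ie = 0"
    and e4: "\<gamma> * Ie - \<mu> * Re = 0"
    and e5: "P * Se - \<mu> * Ve = 0"
  shows "\<mu> * N - A * S * (1 - \<rho>) * I - P * S - \<mu> * S
           = Se * (-(A*(1-\<rho>)*Ie + (P + \<mu>))*x - (A*(1-\<rho>)*Ie)*z - (A*(1-\<rho>)*Ie)*x*z)"
    and "A * S * (1 - \<rho>) * I - (\<sigma> + \<mu>) * E = Ee * ((\<sigma>+\<mu>)*(x - y + z) + (\<sigma>+\<mu>)*x*z)"
    and "\<sigma> * E - (\<gamma> + \<mu>) * I = Ie * ((\<gamma>+\<mu>)*(y - z))"
    and "\<gamma> * I - \<mu> * R = Re * (\<mu>*(z - u))"
    and "P * S - \<mu> * V = Ve * (\<mu>*(x - w))"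
  using assms by algebra+

lemma dist5: "(dist (a1::real, a2::real, a3::real, a4::real, a5::real) (b1, b2, b3, b4, b5))\<^sup>2
   = (a1-b1)\<^sup>2 + (a2-b2)\<^sup>2 + (a3-b3)\<^sup>2 + (a4-b4)\<^sup>2 + (a5-b5)\<^sup>2"
  by (simp add: dist_Pair_Pair dist_real_def)

lemma sq_norm:
  fixes k ik X :: real
  assumes "k * ik = 1"
  shows "k\<^sup>2*(ik*(X-k))\<^sup>2 = (X-k)\<^sup>2"
proof -
  have "k\<^sup>2*(ik*(X-k))\<^sup>2 = (k*ik*(X-k))\<^sup>2" by (simp add: power_mult_distrib)
  thus ?thesis using assms by simp
qed

lemma cancel_inv:
  fixes a b t :: real
  shows "a * b = 1 \<Longrightarrow> a * (b * t) = t"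
  by (simp add: mult.assoc[symmetric])

lemma main_gen:
  fixes N \<mu> \<beta> \<sigma> \<gamma> p \<rho> Se Ee Ie Re Ve :: real
  assumes pos: "Se > 0" "Ee > 0" "Ie > 0" "Re > 0" "Ve > 0" "\<mu> > 0" "\<sigma> + \<mu> > 0" "\<gamma> + \<mu> > 0"
      "\<beta> / N * (1 - \<rho>) * Ie > 0" "p / N + \<mu> > 0"
    and e1: "\<mu> * N - \<beta> / N * Se * (1 - \<rho>) * Ie - p / N * Se - \<mu> * Se = 0"
    and e2: "\<beta> / N * Se * (1 - \<rho>) * Ie - (\<sigma> + \<mu>) * Ee = 0"
    and e3: "\<sigma> * Ee - (\<gamma> + \<mu>) * Ie = 0"
    and e4: "\<gamma> * Ie - \<mu> * Re = 0"
    and e5: "p / N * Se - \<mu> * Ve = 0"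
  shows "asymptotically_stable (seirv_field N \<mu> \<beta> \<sigma> \<gamma> p \<rho>) (Se, Ee, Ie, Re, Ve)"
proof -
  define f where "f = seirv_field N \<mu> \<beta> \<sigma> \<gamma> p \<rho>"
  define xe where "xe = (Se, Ee, Ie, Re, Ve)"
  define q where "q = \<beta> / N * (1 - \<rho>) * Ie"
  define b where "b = p / N + \<mu>"
  define m where "m = \<sigma> + \<mu>"
  define n where "n = \<gamma> + \<mu>"
  define d where "d = q + b"
  define \<epsilon> where "\<epsilon> = m / (4*n + 2*d)"
  define \<eta> where "\<eta> = \<epsilon> * q / 8"
  define \<kappa> where "\<kappa> = \<eta> / \<mu>"
  have qp: "q > 0" "b > 0" "m > 0" "n > 0" using pos unfolding q_def b_def m_def n_def by auto
  have dp: "d > 0" using qp unfolding d_def by auto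
  have ep: "\<epsilon> > 0" unfolding \<epsilon>_def using qp dp by auto
  have etap: "\<eta> > 0" unfolding \<eta>_def using ep qp by auto
  have kp: "\<kappa> > 0" unfolding \<kappa>_def using etap pos by auto
  define iS where "iS = 1/Se"
  define iE where "iE = 1/Ee"
  define iI where "iI = 1/Ie"
  define iR where "iR = 1/Re"
  define iV where "iV = 1/Ve"
  define cx where "cx = (\<lambda>Y::state5. iS * (fst Y - Se))"
  define cy where "cy = (\<lambda>Y::state5. iE * (fst (snd Y) - Ee))"
  define cz where "cz = (\<lambda>Y::state5. iI * (fst (snd (snd Y)) - Ie))"
  define cu where "cu = (\<lambda>Y::state5. iR * (fst (snd (snd (snd Y))) - Re))"
  define cw where "cw = (\<lambda>Y::state5. iV * (snd (snd (snd (snd Y))) - Ve))"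
  define mq where "mq = m/q"
  define mn where "mn = m/n"
  define Pf where "Pf = (\<lambda>x y z u w::real. (mq*x\<^sup>2 + y\<^sup>2 + mn*z\<^sup>2)/2 + \<epsilon>*x*z + \<kappa>*(u\<^sup>2+w\<^sup>2))"
  define \<Phi> where "\<Phi> = (\<lambda>Y. Pf (cx Y) (cy Y) (cz Y) (cu Y) (cw Y))"
  define D\<Phi> where "D\<Phi> = (\<lambda>Y H::state5.
      (mq*cx Y + \<epsilon>*cz Y) * (iS * fst H) + cy Y * (iE * fst (snd H))
      + (mn*cz Y + \<epsilon>*cx Y) * (iI * fst (snd (snd H)))
      + 2*\<kappa>*(cu Y * (iR * fst (snd (snd (snd H)))) + cw Y * (iV * snd (snd (snd (snd H))))))"
  have deriv: "(\<Phi> has_derivative D\<Phi> Y) (at Y)" for Y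
    unfolding \<Phi>_def D\<Phi>_def Pf_def cx_def cy_def cz_def cu_def cw_def
    by (auto intro!: derivative_eq_intros ext simp: field_simps power2_eq_square)
  have inv: "iS * Se = 1" "iE * Ee = 1" "iI * Ie = 1" "iR * Re = 1" "iV * Ve = 1"
    unfolding iS_def iE_def iI_def iR_def iV_def using pos by auto
  have invp: "iS > 0" "iE > 0" "iI > 0" "iR > 0" "iV > 0"
    unfolding iS_def iE_def iI_def iR_def iV_def using pos by auto
  define \<rho>0 where "\<rho>0 = \<eta> / (2*m + \<epsilon>*q)"
  define r where "r = \<rho>0 * min Se (min Ee Ie)"
  define a0 where "a0 = min (min (m/(4*q)) (1/2)) (min (m/(4*n)) \<kappa>)"
  define M where "M = Se\<^sup>2+Ee\<^sup>2+Ie\<^sup>2+Re\<^sup>2+Ve\<^sup>2"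
  define Alo where "Alo = a0 / M"
  define B0 where "B0 = m/q + 1 + m/n + \<epsilon> + \<kappa>"
  define K where "K = iS\<^sup>2+iE\<^sup>2+iI\<^sup>2+iR\<^sup>2+iV\<^sup>2"
  define Bup where "Bup = B0 * K"
  define c where "c = \<eta> / (2*B0)"
  have \<rho>0p: "\<rho>0 > 0" unfolding \<rho>0_def using etap qp ep
    by (intro divide_pos_pos) (auto intro!: add_pos_pos mult_pos_pos)
  have rp: "r > 0" unfolding r_def using \<rho>0p pos by auto
  have a0p: "a0 > 0" unfolding a0_def using qp kp by auto
  have Mp: "M > 0" unfolding M_def using pos by (auto intro!: add_pos_nonneg)
  have B0p: "B0 > 0" unfolding B0_def using qp ep kp by (auto intro!: add_pos_pos)
  have Kp: "K > 0" unfolding K_def using invp by (auto intro!: add_pos_nonneg)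
  have Alop: "Alo > 0" unfolding Alo_def using a0p Mp by auto
  have Bupp: "Bup > 0" unfolding Bup_def using B0p Kp by auto
  have cp: "c > 0" unfolding c_def using etap B0p by auto
  have eq: "f xe = 0"
    unfolding f_def xe_def seirv_field_def using e1 e2 e3 e4 e5 by (simp add: zero_prod_def)
  have Y5: "\<exists>S E I R V. Y = (S,E,I,R,V)" for Y :: state5 by (metis prod.exhaust)
  have Pf_eq: "Pf x y z u w = (m/q*x\<^sup>2 + y\<^sup>2 + m/n*z\<^sup>2)/2 + \<epsilon>*x*z + \<kappa>*(u\<^sup>2+w\<^sup>2)" for x y z u w
    unfolding Pf_def mq_def mn_def by simp
  have lo: "Alo * (dist Y xe)\<^sup>2 \<le> \<Phi> Y" for Y
  proof -
    obtain S E I R V where Y: "Y = (S,E,I,R,V)" using Y5 by blast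
    define x y z u w where "x = cx Y" "y = cy Y" "z = cz Y" "u = cu Y" "w = cw Y"
    have d2: "(dist Y xe)\<^sup>2 = Se\<^sup>2*x\<^sup>2 + Ee\<^sup>2*y\<^sup>2 + Ie\<^sup>2*z\<^sup>2 + Re\<^sup>2*u\<^sup>2 + Ve\<^sup>2*w\<^sup>2"
      unfolding Y xe_def dist5 x_y_z_u_w_def cx_def cy_def cz_def cu_def cw_def
      using sq_norm[OF inv(1)[unfolded mult.commute[of iS]], of S] sq_norm[OF inv(2)[unfolded mult.commute[of iE]], of E]
        sq_norm[OF inv(3)[unfolded mult.commute[of iI]], of I] sq_norm[OF inv(4)[unfolded mult.commute[of iR]], of R]
        sq_norm[OF inv(5)[unfolded mult.commute[of iV]], of V]
      by simp
    have "Se\<^sup>2*x\<^sup>2 \<le> M*x\<^sup>2" "Ee\<^sup>2*y\<^sup>2 \<le> M*y\<^sup>2" "Ie\<^sup>2*z\<^sup>2 \<le> M*z\<^sup>2" "Re\<^sup>2*u\<^sup>2 \<le> M*u\<^sup>2" "Ve\<^sup>2*w\<^sup>2 \<le> M*w\<^sup>2"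
      unfolding M_def by (auto intro!: mult_right_mono)
    hence "(dist Y xe)\<^sup>2 \<le> M*(x\<^sup>2+y\<^sup>2+z\<^sup>2+u\<^sup>2+w\<^sup>2)" unfolding d2 by (simp add: algebra_simps)
    hence "Alo * (dist Y xe)\<^sup>2 \<le> Alo * (M*(x\<^sup>2+y\<^sup>2+z\<^sup>2+u\<^sup>2+w\<^sup>2))" using Alop by (intro mult_left_mono) auto
    also have "\<dots> = a0 * (x\<^sup>2+y\<^sup>2+z\<^sup>2+u\<^sup>2+w\<^sup>2)" unfolding Alo_def using Mp by simp
    also have "\<dots> \<le> \<Phi> Y" unfolding \<Phi>_def Pf_eq x_y_z_u_w_def[symmetric]
      by (rule P_lower[OF qp kp d_def \<epsilon>_def a0_def])
    finally show ?thesis .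
  qed
  have Phi_up: "\<Phi> Y \<le> B0 * ((cx Y)\<^sup>2+(cy Y)\<^sup>2+(cz Y)\<^sup>2+(cu Y)\<^sup>2+(cw Y)\<^sup>2)" for Y
    unfolding \<Phi>_def Pf_eq by (rule P_upper[OF qp(1,3,4) kp ep B0_def])
  have up: "\<Phi> Y \<le> Bup * (dist Y xe)\<^sup>2" for Y
  proof -
    obtain S E I R V where Y: "Y = (S,E,I,R,V)" using Y5 by blast
    have d2: "(dist Y xe)\<^sup>2 = (S-Se)\<^sup>2 + (E-Ee)\<^sup>2 + (I-Ie)\<^sup>2 + (R-Re)\<^sup>2 + (V-Ve)\<^sup>2"
      unfolding Y xe_def dist5 by simp
    have "(cx Y)\<^sup>2 \<le> K*(S-Se)\<^sup>2" "(cy Y)\<^sup>2 \<le> K*(E-Ee)\<^sup>2" "(cz Y)\<^sup>2 \<le> K*(I-Ie)\<^sup>2" "(cu Y)\<^sup>2 \<le> K*(R-Re)\<^sup>2" "(cw Y)\<^sup>2 \<le> K*(V-Ve)\<^sup>2"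
      unfolding K_def Y cx_def cy_def cz_def cu_def cw_def by (auto simp: power_mult_distrib intro!: mult_right_mono)
    hence "(cx Y)\<^sup>2+(cy Y)\<^sup>2+(cz Y)\<^sup>2+(cu Y)\<^sup>2+(cw Y)\<^sup>2 \<le> K * (dist Y xe)\<^sup>2" unfolding d2 by (simp add: algebra_simps)
    hence "B0 * ((cx Y)\<^sup>2+(cy Y)\<^sup>2+(cz Y)\<^sup>2+(cu Y)\<^sup>2+(cw Y)\<^sup>2) \<le> B0 * (K * (dist Y xe)\<^sup>2)" using B0p by (intro mult_left_mono) auto
    thus ?thesis using Phi_up[of Y] unfolding Bup_def by (simp add: mult.assoc)
  qed
  have dec: "D\<Phi> Y (f Y) \<le> - c * \<Phi> Y" if dY: "dist Y xe < r" for Y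
  proof -
    obtain S E I R V where Y: "Y = (S,E,I,R,V)" using Y5 by blast
    define x y z u w where "x = cx Y" "y = cy Y" "z = cz Y" "u = cu Y" "w = cw Y"
    have sub: "S = Se + Se*x" "E = Ee + Ee*y" "I = Ie + Ie*z" "R = Re + Re*u" "V = Ve + Ve*w"
      unfolding x_y_z_u_w_def Y cx_def cy_def cz_def cu_def cw_def using inv
      by (simp_all add: algebra_simps)
    note nf = norm_field[OF sub e1 e2 e3 e4 e5]
    have fY: "f Y = (\<mu> * N - \<beta> / N * S * (1 - \<rho>) * I - p / N * S - \<mu> * S,
         \<beta> / N * S * (1 - \<rho>) * I - (\<sigma> + \<mu>) * E,
         \<sigma> * E - (\<gamma> + \<mu>) * I, \<gamma> * I - \<mu> * R, p / N * S - \<mu> * V)"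
      unfolding f_def Y seirv_field_def by simp
    have DF: "D\<Phi> Y (f Y) = (m/q*x + \<epsilon>*z)*(-d*x - q*z - q*x*z) + y*(m*(x - y + z) + m*x*z) + (m/n*z + \<epsilon>*x)*(n*(y - z))
          + 2*(\<eta>/\<mu>)*(u*(\<mu>*(z-u)) + w*(\<mu>*(x-w)))"
    proof -
      have a: "iS * fst (f Y) = -d*x - q*z - q*x*z" unfolding fY nf(1) fst_conv cancel_inv[OF inv(1)]
        by (simp add: d_def q_def b_def)
      have b': "iE * fst (snd (f Y)) = m*(x - y + z) + m*x*z" unfolding fY nf(2) m_def fst_conv snd_conv
        by (rule cancel_inv[OF inv(2)])
      have c': "iI * fst (snd (snd (f Y))) = n*(y - z)" unfolding fY nf(3) n_def fst_conv snd_conv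
        by (rule cancel_inv[OF inv(3)])
      have d': "iR * fst (snd (snd (snd (f Y)))) = \<mu>*(z-u)" unfolding fY nf(4) fst_conv snd_conv
        by (rule cancel_inv[OF inv(4)])
      have e': "iV * snd (snd (snd (snd (f Y)))) = \<mu>*(x-w)" unfolding fY nf(5) snd_conv
        by (rule cancel_inv[OF inv(5)])
      show ?thesis unfolding D\<Phi>_def a b' c' d' e' x_y_z_u_w_def[symmetric] mq_def mn_def \<kappa>_def by simp
    qed
    have comp: "\<bar>S - Se\<bar> < r" "\<bar>E - Ee\<bar> < r" "\<bar>I - Ie\<bar> < r"
    proof -
      have d2: "(dist Y xe)\<^sup>2 = (S-Se)\<^sup>2 + (E-Ee)\<^sup>2 + (I-Ie)\<^sup>2 + (R-Re)\<^sup>2 + (V-Ve)\<^sup>2"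
        unfolding Y xe_def dist5 by simp
      have "\<bar>S - Se\<bar>\<^sup>2 \<le> (dist Y xe)\<^sup>2" "\<bar>E - Ee\<bar>\<^sup>2 \<le> (dist Y xe)\<^sup>2" "\<bar>I - Ie\<bar>\<^sup>2 \<le> (dist Y xe)\<^sup>2"
        unfolding d2 by auto
      hence "\<bar>S - Se\<bar> \<le> dist Y xe" "\<bar>E - Ee\<bar> \<le> dist Y xe" "\<bar>I - Ie\<bar> \<le> dist Y xe"
        by (auto intro: power2_le_imp_le)
      thus "\<bar>S - Se\<bar> < r" "\<bar>E - Ee\<bar> < r" "\<bar>I - Ie\<bar> < r" using dY by auto
    qed
    have bx: "\<bar>x\<bar> \<le> \<rho>0" "\<bar>y\<bar> \<le> \<rho>0" "\<bar>z\<bar> \<le> \<rho>0"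
    proof -
      have "r \<le> \<rho>0 * Se" "r \<le> \<rho>0 * Ee" "r \<le> \<rho>0 * Ie" unfolding r_def using \<rho>0p
        by (auto intro!: mult_left_mono)
      hence "\<bar>S - Se\<bar> \<le> \<rho>0 * Se" "\<bar>E - Ee\<bar> \<le> \<rho>0 * Ee" "\<bar>I - Ie\<bar> \<le> \<rho>0 * Ie" using comp by auto
      hence "iS * \<bar>S - Se\<bar> \<le> iS * (\<rho>0 * Se)" "iE * \<bar>E - Ee\<bar> \<le> iE * (\<rho>0 * Ee)" "iI * \<bar>I - Ie\<bar> \<le> iI * (\<rho>0 * Ie)"
        using invp by (auto intro!: mult_left_mono)
      moreover have "iS * (\<rho>0 * Se) = \<rho>0" "iE * (\<rho>0 * Ee) = \<rho>0" "iI * (\<rho>0 * Ie) = \<rho>0"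
        using inv by (simp_all add: mult.left_commute[of _ \<rho>0])
      moreover have "\<bar>x\<bar> = iS * \<bar>S - Se\<bar>" "\<bar>y\<bar> = iE * \<bar>E - Ee\<bar>" "\<bar>z\<bar> = iI * \<bar>I - Ie\<bar>"
        unfolding x_y_z_u_w_def Y cx_def cy_def cz_def using invp by (simp_all add: abs_mult)
      ultimately show "\<bar>x\<bar> \<le> \<rho>0" "\<bar>y\<bar> \<le> \<rho>0" "\<bar>z\<bar> \<le> \<rho>0" by simp_all
    qed
    have rho_ok: "(2*m + \<epsilon>*q)*\<rho>0 \<le> \<eta>"
    proof -
      have "2*m + \<epsilon>*q > 0" using qp ep by (auto intro!: add_pos_pos)
      thus ?thesis unfolding \<rho>0_def by simp
    qed
    have k: "D\<Phi> Y (f Y) \<le> -(\<eta>/2)*(x\<^sup>2+y\<^sup>2+z\<^sup>2+u\<^sup>2+w\<^sup>2)"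
      unfolding DF by (rule key_full[OF qp pos(6) d_def \<epsilon>_def \<eta>_def bx rho_ok])
    have "\<Phi> Y \<le> B0 * (x\<^sup>2+y\<^sup>2+z\<^sup>2+u\<^sup>2+w\<^sup>2)" using Phi_up[of Y] unfolding x_y_z_u_w_def .
    hence "c * \<Phi> Y \<le> c * (B0 * (x\<^sup>2+y\<^sup>2+z\<^sup>2+u\<^sup>2+w\<^sup>2))" using cp by (intro mult_left_mono) auto
    also have "\<dots> = (\<eta>/2)*(x\<^sup>2+y\<^sup>2+z\<^sup>2+u\<^sup>2+w\<^sup>2)" unfolding c_def using B0p by simp
    finally show ?thesis using k by simp
  qed
  show ?thesis
    using generic_stable[where f=f and xe=xe and \<Phi>=\<Phi> and D\<Phi>=D\<Phi> and A=Alo and B=Bup and r=r and c=c,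
        OF deriv lo up Alop Bupp rp cp dec eq]
    unfolding f_def xe_def by blast
qed

theorem mainTheorem6:
  fixes N \<mu> \<beta> \<sigma> \<gamma> p \<rho> :: real
  assumes "N > 0" "\<mu> > 0" "\<beta> > 0" "\<sigma> > 0" "\<gamma> > 0" "p > 0"
      and "0 < \<rho>" "\<rho> < 1"
      and "R0_seirv N \<mu> \<beta> \<sigma> \<gamma> p \<rho> > 1"
  shows "let Se = (\<sigma> + \<mu>) * (\<gamma> + \<mu>) * N / (\<sigma> * \<beta> * (1 - \<rho>));
             Ie = (\<mu> * N * \<sigma> * \<beta> * (1 - \<rho>) - (\<sigma> + \<mu>) * (\<gamma> + \<mu>) * (p + \<mu> * N))
                  / ((\<sigma> + \<mu>) * (\<gamma> + \<mu>) * \<beta> * (1 - \<rho>));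
             Ee = (\<gamma> + \<mu>) / \<sigma> * Ie;
             Re = \<gamma> / \<mu> * Ie;
             Ve = p / (\<mu> * N) * Se
         in asymptotically_stable (seirv_field N \<mu> \<beta> \<sigma> \<gamma> p \<rho>) (Se, Ee, Ie, Re, Ve)"
proof -
  note h = assms
  define Se where "Se = (\<sigma> + \<mu>) * (\<gamma> + \<mu>) * N / (\<sigma> * \<beta> * (1 - \<rho>))"
  define Ie where "Ie = (\<mu> * N * \<sigma> * \<beta> * (1 - \<rho>) - (\<sigma> + \<mu>) * (\<gamma> + \<mu>) * (p + \<mu> * N))
                  / ((\<sigma> + \<mu>) * (\<gamma> + \<mu>) * \<beta> * (1 - \<rho>))"
  define Ee where "Ee = (\<gamma> + \<mu>) / \<sigma> * Ie"
  define Re where "Re = \<gamma> / \<mu> * Ie"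
  define Ve where "Ve = p / (\<mu> * N) * Se"
  have r1: "1 - \<rho> > 0" using h by simp
  have K0: "(\<sigma> + \<mu>) * (\<gamma> + \<mu>) > 0" using h by simp
  have den: "(\<sigma> + \<mu>) * (\<gamma> + \<mu>) * (p + \<mu> * N) > 0" using h by (simp add: add_pos_pos)
  have num: "\<mu> * N * \<sigma> * \<beta> * (1 - \<rho>) > (\<sigma> + \<mu>) * (\<gamma> + \<mu>) * (p + \<mu> * N)"
    using h(9) den unfolding R0_seirv_def by (simp add: less_divide_eq)
  have Sep: "Se > 0" unfolding Se_def using h r1 by simp
  have Iep: "Ie > 0" unfolding Ie_def using num K0 h r1 by simp
  have Eep: "Ee > 0" unfolding Ee_def using Iep h by simp
  have Rep: "Re > 0" unfolding Re_def using Iep h by simp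
  have Vep: "Ve > 0" unfolding Ve_def using Sep h by simp
  have qpos: "\<beta> / N * (1 - \<rho>) * Ie > 0" using h r1 Iep by simp
  have bpos: "p / N + \<mu> > 0" using h by (simp add: add_pos_pos)
  define K where "K = (\<sigma> + \<mu>) * (\<gamma> + \<mu>)"
  define t where "t = 1 - \<rho>"
  have r1': "t \<noteq> 0" using r1 unfolding t_def by simp
  have Kp: "K > 0" unfolding K_def using K0 .
  have s1: "\<beta> / N * Se * (1 - \<rho>) = K / \<sigma>"
    unfolding Se_def K_def[symmetric] t_def[symmetric] using h r1' by (simp add: field_simps)
  have s2: "K / \<sigma> * Ie = \<mu> * N - K * (p + \<mu> * N) / (\<sigma> * \<beta> * (1 - \<rho>))"
    unfolding Ie_def K_def[symmetric] t_def[symmetric] using h r1' Kp by (simp add: field_simps)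
  have s3: "p / N * Se + \<mu> * Se = K * (p + \<mu> * N) / (\<sigma> * \<beta> * (1 - \<rho>))"
    unfolding Se_def K_def[symmetric] t_def[symmetric] using h r1' by (simp add: field_simps)
  have s4: "\<beta> / N * Se * (1 - \<rho>) * Ie = K / \<sigma> * Ie" using s1 by simp
  have e1: "\<mu> * N - \<beta> / N * Se * (1 - \<rho>) * Ie - p / N * Se - \<mu> * Se = 0"
    using s2 s3 s4 by linarith
  have e2: "\<beta> / N * Se * (1 - \<rho>) * Ie - (\<sigma> + \<mu>) * Ee = 0"
    unfolding s4 Ee_def K_def using h by (simp add: field_simps)
  have e3: "\<sigma> * Ee - (\<gamma> + \<mu>) * Ie = 0"
    unfolding Ee_def using h by (simp add: field_simps)
  have e4: "\<gamma> * Ie - \<mu> * Re = 0"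
    unfolding Re_def using h by (simp add: field_simps)
  have e5: "p / N * Se - \<mu> * Ve = 0"
    unfolding Ve_def using h by (simp add: field_simps)
  have "asymptotically_stable (seirv_field N \<mu> \<beta> \<sigma> \<gamma> p \<rho>) (Se, Ee, Ie, Re, Ve)"
    by (rule main_gen[OF Sep Eep Iep Rep Vep h(2) _ _ qpos bpos e1 e2 e3 e4 e5]) (use h in auto)
  thus ?thesis unfolding Let_def Se_def Ie_def Ee_def Re_def Ve_def .
qed

end
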